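(* Suppose $\mathds{G}$ is an element-based (respectively set-based) generator that generates in the limit from every countable collection under enumerations without noise or omissions. Let $\mathcal{L}$ be a countable collection and let $\tilde{\mathcal{L}}=\{L\cup A\setminus B: L\in\mathcal{L},\ A\subseteq U\setminus L,\ B\subseteq L,\ |A|<\infty,\ |B|<\infty\}$. Suppose $x_{1:\infty}$ is an enumeration of some target language $K\in\mathcal{L}$ with finite noise and finite omissions. Then $\mathds{G}$ applied to the collection $\tilde{\mathcal{L}}$ generates from $K$ in the limit under the enumeration $x_{1:\infty}$.
   Context: The universe $U=\mathbb{N}$ is countable; a language is an infinite subset of $U$; a collection is a countable family of languages (note $\tilde{\mathcal{L}}$ is countable). An enumeration of $L$ without noise or omissions lists every element of $L$ exactly once and nothing else. An enumeration of $K$ with finite noise and finite omissions is a sequence of distinct elements listing every element of some $\hat K\subseteq K$ with $|K\setminus\hat K|<\infty$ together with only finitely many elements outside $\hat K$. An element-based generator outputs at step $n$ an element $w_n\notin\{x_1,\dots,x_n,w_1,\dots,w_{n-1}\}$; a set-based generator outputs $A_n\subseteq U\setminus\{x_1,\dots,x_n\}$. Generating in the limit from a language $T$ means $w_n\in T$ (resp. $A_n\subseteq T$) for all sufficiently large $n$; generating in the limit from a collection under a class of enumerations means doing so for every member $T$ of the collection and every enumeration of $T$ in the class. *)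

theory Defs
  imports Main "HOL-Library.Countable_Set"
begin

text \<open>Universe U = nat. A generator receives the collection and the
prefix x_1..x_n (a list of length n) and produces its output at step n.\<close>

type_synonym collection = "nat set set"

definition is_collection :: "collection \<Rightarrow> bool" where
  "is_collection C \<longleftrightarrow> countable C \<and> (\<forall>L\<in>C. infinite L)"

definition prefix :: "(nat \<Rightarrow> nat) \<Rightarrow> nat \<Rightarrow> nat list" where
  "prefix x n = map x [0..<n]"

text \<open>Enumeration of L without noise or omissions (x 0 is x_1).\<close>
definition clean_enum :: "(nat \<Rightarrow> nat) \<Rightarrow> nat set \<Rightarrow> bool" where
  "clean_enum x L \<longleftrightarrow> inj x \<and> range x = L"

definition noisy_enum :: "(nat \<Rightarrow> nat) \<Rightarrow> nat set \<Rightarrow> bool" where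
  "noisy_enum x K \<longleftrightarrow> inj x \<and>
     (\<exists>Khat. Khat \<subseteq> K \<and> finite (K - Khat) \<and> Khat \<subseteq> range x \<and> finite (range x - Khat))"

text \<open>Element-based generator: w_n avoids x_1..x_n and w_1..w_{n-1}.\<close>
definition element_based :: "(collection \<Rightarrow> nat list \<Rightarrow> nat) \<Rightarrow> bool" where
  "element_based G \<longleftrightarrow> (\<forall>C xs. xs \<noteq> [] \<longrightarrow>
      G C xs \<notin> set xs \<and> (\<forall>i. 0 < i \<and> i < length xs \<longrightarrow> G C xs \<noteq> G C (take i xs)))"

definition set_based :: "(collection \<Rightarrow> nat list \<Rightarrow> nat set) \<Rightarrow> bool" where
  "set_based G \<longleftrightarrow> (\<forall>C xs. xs \<noteq> [] \<longrightarrow> G C xs \<inter> set xs = {})"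

definition elem_generates :: "(collection \<Rightarrow> nat list \<Rightarrow> nat) \<Rightarrow> collection \<Rightarrow> nat set \<Rightarrow> (nat \<Rightarrow> nat) \<Rightarrow> bool" where
  "elem_generates G C T x \<longleftrightarrow> (\<exists>N. \<forall>n\<ge>N. G C (prefix x n) \<in> T)"

definition set_generates :: "(collection \<Rightarrow> nat list \<Rightarrow> nat set) \<Rightarrow> collection \<Rightarrow> nat set \<Rightarrow> (nat \<Rightarrow> nat) \<Rightarrow> bool" where
  "set_generates G C T x \<longleftrightarrow> (\<exists>N. \<forall>n\<ge>N. G C (prefix x n) \<subseteq> T)"

definition elem_generates_all_clean :: "(collection \<Rightarrow> nat list \<Rightarrow> nat) \<Rightarrow> bool" where
  "elem_generates_all_clean G \<longleftrightarrow> (\<forall>C. is_collection C \<longrightarrow>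
      (\<forall>T\<in>C. \<forall>x. clean_enum x T \<longrightarrow> elem_generates G C T x))"

definition set_generates_all_clean :: "(collection \<Rightarrow> nat list \<Rightarrow> nat set) \<Rightarrow> bool" where
  "set_generates_all_clean G \<longleftrightarrow> (\<forall>C. is_collection C \<longrightarrow>
      (\<forall>T\<in>C. \<forall>x. clean_enum x T \<longrightarrow> set_generates G C T x))"

definition perturb :: "collection \<Rightarrow> collection" where
  "perturb C = {(L \<union> A) - B | L A B. L \<in> C \<and> A \<subseteq> UNIV - L \<and> B \<subseteq> L \<and> finite A \<and> finite B}"

end

theory Submission
  imports Defs
begin

lemma perturb_coll:
  assumes "is_collection C"
  shows "is_collection (perturb C)"
proof -
  have "perturb C \<subseteq> (\<lambda>(L,A,B). (L \<union> A) - B) ` (C \<times> Collect finite \<times> Collect finite)"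
    unfolding perturb_def by (auto simp: image_iff)
  moreover have "countable (C \<times> (Collect finite :: nat set set) \<times> (Collect finite :: nat set set))"
    using assms countable_Collect_finite unfolding is_collection_def by blast
  ultimately have "countable (perturb C)" by (meson countable_image countable_subset)
  moreover have "\<forall>L\<in>perturb C. infinite L"
  proof
    fix T assume "T \<in> perturb C"
    then obtain L A B where "T = (L \<union> A) - B" "L \<in> C" "finite B" unfolding perturb_def by blast
    moreover have "infinite L" using assms \<open>L \<in> C\<close> unfolding is_collection_def by blast
    ultimately show "infinite T"
      by (metis Diff_infinite_finite Diff_mono finite_subset order_refl sup_ge1)
  qed
  ultimately show ?thesis unfolding is_collection_def by blast
qed

lemma key:
  assumes "is_collection C" "K \<in> C" "noisy_enum x K"
  shows "range x \<in> perturb C" "clean_enum x (range x)"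
        "\<exists>M. \<forall>n\<ge>M. range x - K \<subseteq> set (prefix x n)"
proof -
  obtain Khat where kh: "Khat \<subseteq> K" "finite (K - Khat)" "Khat \<subseteq> range x" "finite (range x - Khat)"
    and ij: "inj x" using assms(3) unfolding noisy_enum_def by blast
  show "clean_enum x (range x)" using ij unfolding clean_enum_def by simp
  have fA: "finite (range x - K)" using kh by (meson Diff_mono finite_subset order_refl)
  have fB: "finite (K - range x)" using kh by (meson Diff_mono finite_subset order_refl)
  have "range x = (K \<union> (range x - K)) - (K - range x)" by blast
  then show "range x \<in> perturb C" unfolding perturb_def using assms(2) fA fB by blast
  have "finite (x -` (range x - K))" using fA ij by (simp add: finite_vimageI)
  then obtain M where M: "x -` (range x - K) \<subseteq> {..<M}" using finite_nat_bounded by blast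
  show "\<exists>M. \<forall>n\<ge>M. range x - K \<subseteq> set (prefix x n)"
  proof (intro exI allI impI subsetI)
    fix n y assume "M \<le> n" "y \<in> range x - K"
    then obtain i where "y = x i" "i < M" using M by blast
    then show "y \<in> set (prefix x n)" using \<open>M \<le> n\<close> unfolding prefix_def by auto
  qed
qed

theorem lemma4p3:
  shows "(\<forall>(G :: collection \<Rightarrow> nat list \<Rightarrow> nat) C K x.
            element_based G \<and> elem_generates_all_clean G \<and> is_collection C \<and> K \<in> C \<and> noisy_enum x K
            \<longrightarrow> elem_generates G (perturb C) K x)
       \<and> (\<forall>(G :: collection \<Rightarrow> nat list \<Rightarrow> nat set) C K x.
            set_based G \<and> set_generates_all_clean G \<and> is_collection C \<and> K \<in> C \<and> noisy_enum x K
            \<longrightarrow> set_generates G (perturb C) K x)"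
proof (intro conjI allI impI)
  fix G :: "collection \<Rightarrow> nat list \<Rightarrow> nat" and C K x
  assume a: "element_based G \<and> elem_generates_all_clean G \<and> is_collection C \<and> K \<in> C \<and> noisy_enum x K"
  hence pc: "is_collection (perturb C)" using perturb_coll by blast
  from a key have k1: "range x \<in> perturb C" "clean_enum x (range x)" by blast+
  from a key obtain M where M: "\<forall>n\<ge>M. range x - K \<subseteq> set (prefix x n)" by blast
  from a pc k1 obtain N where N: "\<forall>n\<ge>N. G (perturb C) (prefix x n) \<in> range x"
    unfolding elem_generates_all_clean_def elem_generates_def by blast
  show "elem_generates G (perturb C) K x" unfolding elem_generates_def
  proof (intro exI allI impI)
    fix n assume n: "max N (max M 1) \<le> n"
    hence ne: "prefix x n \<noteq> []" unfolding prefix_def by auto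
    have "G (perturb C) (prefix x n) \<notin> set (prefix x n)"
      using a ne unfolding element_based_def by blast
    then show "G (perturb C) (prefix x n) \<in> K" using N M n by auto
  qed
next
  fix G :: "collection \<Rightarrow> nat list \<Rightarrow> nat set" and C K x
  assume a: "set_based G \<and> set_generates_all_clean G \<and> is_collection C \<and> K \<in> C \<and> noisy_enum x K"
  hence pc: "is_collection (perturb C)" using perturb_coll by blast
  from a key have k1: "range x \<in> perturb C" "clean_enum x (range x)" by blast+
  from a key obtain M where M: "\<forall>n\<ge>M. range x - K \<subseteq> set (prefix x n)" by blast
  from a pc k1 obtain N where N: "\<forall>n\<ge>N. G (perturb C) (prefix x n) \<subseteq> range x"
    unfolding set_generates_all_clean_def set_generates_def by blast
  show "set_generates G (perturb C) K x" unfolding set_generates_def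
  proof (intro exI allI impI)
    fix n assume n: "max N (max M 1) \<le> n"
    hence ne: "prefix x n \<noteq> []" unfolding prefix_def by auto
    have "G (perturb C) (prefix x n) \<inter> set (prefix x n) = {}"
      using a ne unfolding set_based_def by blast
    then show "G (perturb C) (prefix x n) \<subseteq> K" using N M n by fastforce
  qed
qed

end
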